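(* Let $f\in\mathcal{K}$ have radius of convergence $R>0$ and fulcrum $F$. Assume that $f$ is Gaussian and that for some even integer $n\ge4$, $$\limsup_{s\uparrow\ln R}\frac{|F^{(j)}(s)|}{F''(s)^{j/2}}<+\infty\quad\text{for every }3\le j\le n.$$ Then $$\lim_{s\uparrow\ln R}\frac{F^{(j)}(s)}{F''(s)^{j/2}}=0\quad\text{for every }3\le j<n.$$
   Context: The class $\mathcal{K}$ consists of non-constant power series $f(z)=\sum_{n\ge0}a_nz^n$ with radius of convergence $R\in(0,+\infty]$, with $a_n\ge 0$ for all $n$ and $a_0>0$. For $t\in(0,R)$, $X_t$ is the random variable with $\mathbf{P}(X_t=n)=a_nt^n/f(t)$, $n\ge0$. Write $m_f(t)=\mathbf{E}(X_t)$, $\sigma_f^2(t)=\mathbf{V}(X_t)>0$ and $\breve{X}_t=(X_t-m_f(t))/\sigma_f(t)$. $f$ is called Gaussian if $\breve{X}_t$ converges in distribution to a standard normal random variable as $t\uparrow R$. The fulcrum of $f$ is $F(s)=\ln f(e^s)$ for real $s<\ln R$ (with $\ln R=+\infty$ if $R=+\infty$); $F''(s)=\sigma_f^2(e^s)$. *)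

theory Defs
  imports "HOL-Probability.Probability"
begin

text \<open>A power series f(z) = sum a_n z^n is represented by its coefficient sequence a.\<close>

definition classK :: "(nat \<Rightarrow> real) \<Rightarrow> bool" where
  "classK a \<longleftrightarrow> (\<forall>n. a n \<ge> 0) \<and> a 0 > 0 \<and> (\<exists>n>0. a n \<noteq> 0) \<and> conv_radius a > 0"

definition psum :: "(nat \<Rightarrow> real) \<Rightarrow> real \<Rightarrow> real" where
  "psum a t = (\<Sum>n. a n * t ^ n)"

definition up_to_R :: "ereal \<Rightarrow> real filter" where
  "up_to_R R = (if R = \<infinity> then at_top else at_left (real_of_ereal R))"

definition up_to_lnR :: "ereal \<Rightarrow> real filter" where
  "up_to_lnR R = (if R = \<infinity> then at_top else at_left (ln (real_of_ereal R)))"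

text \<open>Mean and variance of X_t, where P(X_t = n) = a_n t^n / f(t).\<close>
definition mean_f :: "(nat \<Rightarrow> real) \<Rightarrow> real \<Rightarrow> real" where
  "mean_f a t = (\<Sum>n. real n * a n * t ^ n) / psum a t"

definition var_f :: "(nat \<Rightarrow> real) \<Rightarrow> real \<Rightarrow> real" where
  "var_f a t = (\<Sum>n. (real n - mean_f a t)\<^sup>2 * a n * t ^ n) / psum a t"

definition cdf_normalized :: "(nat \<Rightarrow> real) \<Rightarrow> real \<Rightarrow> real \<Rightarrow> real" where
  "cdf_normalized a t x =
     (\<Sum>n. (if (real n - mean_f a t) / sqrt (var_f a t) \<le> x then a n * t ^ n else 0)) / psum a t"

definition Phi :: "real \<Rightarrow> real" where
  "Phi x = (LINT y:{..x}|lborel. std_normal_density y)"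

text \<open>Gaussian: the normalized X_t converges in distribution to N(0,1) as t increases to R;
  since the limit distribution function is continuous, this is pointwise convergence of
  distribution functions at every x.\<close>
definition gaussian :: "(nat \<Rightarrow> real) \<Rightarrow> bool" where
  "gaussian a \<longleftrightarrow> (\<forall>x. ((\<lambda>t. cdf_normalized a t x) \<longlongrightarrow> Phi x) (up_to_R (conv_radius a)))"

definition fulcrum :: "(nat \<Rightarrow> real) \<Rightarrow> real \<Rightarrow> real" where
  "fulcrum a s = ln (psum a (exp s))"

end

theory Submission
  imports Defs
begin


fun Ck :: "nat \<Rightarrow> real set \<Rightarrow> (real \<Rightarrow> real) \<Rightarrow> bool" where
  "Ck 0 S f = True"
| "Ck (Suc k) S f = ((\<forall>x\<in>S. (f has_real_derivative deriv f x) (at x)) \<and> Ck k S (deriv f))"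

lemma Ck_cong:
  assumes "open S" shows "Ck k S f \<Longrightarrow> (\<And>x. x \<in> S \<Longrightarrow> f x = g x) \<Longrightarrow> Ck k S g"
proof (induction k arbitrary: f g)
  case 0 then show ?case by simp
next
  case (Suc k)
  have d: "(g has_real_derivative deriv f x) (at x)" if "x \<in> S" for x
    using Suc.prems that assms by (auto intro: has_field_derivative_transform_within_open)
  have e: "deriv g x = deriv f x" if "x \<in> S" for x using d[OF that] by (rule DERIV_imp_deriv)
  show ?case using Suc.prems d e Suc.IH[of "deriv f" "deriv g"] by auto
qed

lemma Ck_mono: "Ck (Suc k) S f \<Longrightarrow> Ck k S f"
proof (induction k arbitrary: f)
  case 0 then show ?case by simp
next
  case (Suc k) then show ?case by auto
qed

lemma Ck_le: "Ck k S f \<Longrightarrow> j \<le> k \<Longrightarrow> Ck j S f"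
proof (induction k)
  case 0 then show ?case by simp
next
  case (Suc k)
  show ?case
  proof (cases "j = Suc k")
    case True then show ?thesis using Suc.prems by simp
  next
    case False then show ?thesis using Suc.IH[OF Ck_mono[OF Suc.prems(1)]] Suc.prems(2) by simp
  qed
qed

lemma Ck_const: "Ck k S (\<lambda>x. c)"
proof (induction k arbitrary: c)
  case 0 then show ?case by simp
next
  case (Suc k)
  have "deriv (\<lambda>x. c) = (\<lambda>x. 0)" by (rule ext) (rule DERIV_imp_deriv, rule DERIV_const)
  then show ?case using Suc by auto
qed

lemma Ck_add:
  assumes "open S" shows "Ck k S f \<Longrightarrow> Ck k S g \<Longrightarrow> Ck k S (\<lambda>x. f x + g x)"
proof (induction k arbitrary: f g)
  case 0 then show ?case by simp
next
  case (Suc k)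
  have d: "((\<lambda>x. f x + g x) has_real_derivative deriv f x + deriv g x) (at x)" if "x \<in> S" for x
    using Suc.prems that by (auto intro!: derivative_eq_intros)
  have e: "deriv (\<lambda>x. f x + g x) x = deriv f x + deriv g x" if "x \<in> S" for x
    using d[OF that] by (rule DERIV_imp_deriv)
  have "Ck k S (\<lambda>x. deriv f x + deriv g x)" using Suc by auto
  then have "Ck k S (deriv (\<lambda>x. f x + g x))" by (rule Ck_cong[OF assms]) (simp add: e)
  then show ?case using d e by auto
qed

lemma Ck_mult:
  assumes "open S" shows "Ck k S f \<Longrightarrow> Ck k S g \<Longrightarrow> Ck k S (\<lambda>x. f x * g x)"
proof (induction k arbitrary: f g)
  case 0 then show ?case by simp
next
  case (Suc k)
  have d: "((\<lambda>x. f x * g x) has_real_derivative deriv f x * g x + f x * deriv g x) (at x)" if "x \<in> S" for x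
    using Suc.prems that by (auto intro!: derivative_eq_intros)
  have e: "deriv (\<lambda>x. f x * g x) x = deriv f x * g x + f x * deriv g x" if "x \<in> S" for x
    using d[OF that] by (rule DERIV_imp_deriv)
  have f: "Ck k S f" "Ck k S g" using Suc.prems by (auto intro: Ck_mono)
  have "Ck k S (\<lambda>x. deriv f x * g x + f x * deriv g x)"
    using Suc f by (intro Ck_add[OF assms]) auto
  then have "Ck k S (deriv (\<lambda>x. f x * g x))" by (rule Ck_cong[OF assms]) (simp add: e)
  then show ?case using d e by auto
qed

lemma Ck_inv:
  assumes "open S" and nz: "\<And>x. x \<in> S \<Longrightarrow> g x \<noteq> 0"
  shows "Ck k S g \<Longrightarrow> Ck k S (\<lambda>x. 1 / g x)"
proof (induction k)
  case 0 then show ?case by simp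
next
  case (Suc k)
  have d: "((\<lambda>x. 1 / g x) has_real_derivative (- deriv g x) * (1 / g x) * (1 / g x)) (at x)" if "x \<in> S" for x
    using Suc.prems that nz[OF that] 
    by (auto intro!: derivative_eq_intros simp: power2_eq_square field_simps)
  have e: "deriv (\<lambda>x. 1 / g x) x = (- deriv g x) * (1 / g x) * (1 / g x)" if "x \<in> S" for x
    using d[OF that] by (rule DERIV_imp_deriv)
  have f: "Ck k S (\<lambda>x. 1 / g x)" using Suc.IH[OF Ck_mono[OF Suc.prems]] .
  have g: "Ck k S (\<lambda>x. - deriv g x)"
    using Suc.prems Ck_mult[OF assms(1), of k "\<lambda>x. -1" "deriv g"] by (auto simp: Ck_const)
  have "Ck k S (\<lambda>x. (- deriv g x) * (1 / g x) * (1 / g x))"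
    using f g by (intro Ck_mult[OF assms(1)]) auto
  then have "Ck k S (deriv (\<lambda>x. 1 / g x))" by (rule Ck_cong[OF assms(1)]) (simp add: e)
  then show ?case using d e by auto
qed

lemma Ck_ln:
  assumes "open S" and pos: "\<And>x. x \<in> S \<Longrightarrow> g x > 0" and "Ck (Suc k) S g"
  shows "Ck (Suc k) S (\<lambda>x. ln (g x))"
proof -
  have d: "((\<lambda>x. ln (g x)) has_real_derivative deriv g x * (1 / g x)) (at x)" if "x \<in> S" for x
    using assms that pos[OF that] by (auto intro!: derivative_eq_intros simp: field_simps)
  have e: "deriv (\<lambda>x. ln (g x)) x = deriv g x * (1 / g x)" if "x \<in> S" for x
    using d[OF that] by (rule DERIV_imp_deriv)
  have "Ck k S (\<lambda>x. deriv g x * (1 / g x))"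
    using assms by (intro Ck_mult Ck_inv) (auto intro: Ck_mono dest: pos)
  then have "Ck k S (deriv (\<lambda>x. ln (g x)))" by (rule Ck_cong[OF assms(1)]) (simp add: e)
  then show ?thesis using d e by auto
qed

lemma higher_deriv_cong_open:
  assumes "open S" "\<And>x. x \<in> S \<Longrightarrow> f x = g x" "x \<in> S"
  shows "(deriv ^^ k) f x = (deriv ^^ k) g x"
  using assms(3)
proof (induction k arbitrary: x)
  case 0 then show ?case using assms by simp
next
  case (Suc k)
  have "eventually (\<lambda>y. y \<in> S) (nhds x)" using assms(1) Suc.prems by (rule eventually_nhds_in_open)
  then have "eventually (\<lambda>y. (deriv ^^ k) f y = (deriv ^^ k) g y) (nhds x)"
    by eventually_elim (rule Suc.IH)
  then show ?case by (simp add: deriv_cong_ev)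
qed

lemma Ck_seq:
  assumes "open S" and "\<And>j x. x \<in> S \<Longrightarrow> (G j has_real_derivative G (Suc j) x) (at x)"
  shows "Ck k S (G 0) \<and> (\<forall>x\<in>S. (deriv ^^ k) (G 0) x = G k x)"
  using assms(2)
proof (induction k arbitrary: G)
  case 0 then show ?case by simp
next
  case (Suc k)
  have e: "deriv (G 0) x = G 1 x" if "x \<in> S" for x using DERIV_imp_deriv[OF Suc.prems[of x 0]] that by simp
  have IH: "Ck k S (G 1) \<and> (\<forall>x\<in>S. (deriv ^^ k) (G 1) x = G (Suc k) x)"
    using Suc.IH[of "\<lambda>j. G (Suc j)"] Suc.prems by auto
  have c: "Ck k S (deriv (G 0))"
    by (rule Ck_cong[OF assms(1), of k "G 1"]) (use IH e in auto)
  have "(deriv ^^ Suc k) (G 0) x = G (Suc k) x" if "x \<in> S" for x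
  proof -
    have "(deriv ^^ Suc k) (G 0) x = (deriv ^^ k) (deriv (G 0)) x" by (simp add: funpow_Suc_right del: funpow.simps)
    also have "\<dots> = (deriv ^^ k) (G 1) x" using that by (intro higher_deriv_cong_open[OF assms(1)]) (auto simp: e)
    also have "\<dots> = G (Suc k) x" using IH that by auto
    finally show ?thesis .
  qed
  then show ?case using c Suc.prems e by auto
qed

lemma Ck_smooth:
  assumes "\<And>k. Ck k S f" "x \<in> S"
  shows "((deriv ^^ k) f has_real_derivative (deriv ^^ Suc k) f x) (at x)"
  using assms(1)
proof (induction k arbitrary: f)
  case 0 then show ?case using Ck.simps(2)[of 0 S f] assms(2) by auto
next
  case (Suc k)
  have "\<And>j. Ck j S (deriv f)" using Suc.prems[of "Suc j" for j] by simp
  from Suc.IH[OF this] show ?case by (simp add: funpow_Suc_right del: funpow.simps)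
qed

lemma leibniz_seq:
  assumes "open S"
    and dA: "\<And>j x. x \<in> S \<Longrightarrow> (A j has_real_derivative A (Suc j) x) (at x)"
    and dB: "\<And>j x. x \<in> S \<Longrightarrow> (B j has_real_derivative B (Suc j) x) (at x)"
    and dC: "\<And>j x. x \<in> S \<Longrightarrow> (C j has_real_derivative C (Suc j) x) (at x)"
    and C0: "\<And>x. x \<in> S \<Longrightarrow> C 0 x = A 0 x * B 0 x"
  shows "x \<in> S \<Longrightarrow> C k x = (\<Sum>i\<le>k. real (k choose i) * A i x * B (k - i) x)"
proof (induction k arbitrary: x)
  case 0 then show ?case using C0 by simp
next
  case (Suc k)
  let ?R = "\<lambda>x. (\<Sum>i\<le>k. real (k choose i) * A i x * B (k - i) x)"
  let ?D = "(\<Sum>i\<le>k. real (k choose i) * (A (Suc i) x * B (k - i) x + A i x * B (Suc (k - i)) x))"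
  have "(?R has_real_derivative ?D) (at x)"
    by (rule derivative_eq_intros refl dA dB Suc.prems | simp add: algebra_simps)+
  moreover have "(?R has_real_derivative C (Suc k) x) (at x)"
    using dC[OF Suc.prems, of k] \<open>open S\<close> Suc.prems Suc.IH
    by (rule has_field_derivative_transform_within_open) 
  ultimately have eq: "C (Suc k) x = ?D" by (rule DERIV_unique[symmetric])
  have s1: "(\<Sum>i\<le>k. real (k choose i) * A i x * B (Suc (k - i)) x)
      = A 0 x * B (Suc k) x + (\<Sum>i\<le>k. real (k choose Suc i) * A (Suc i) x * B (k - i) x)"
  proof -
    have "(\<Sum>i\<le>k. real (k choose i) * A i x * B (Suc (k - i)) x)
        = (\<Sum>i\<le>Suc k. real (k choose i) * A i x * B (Suc k - i) x)"
      by (simp add: Suc_diff_le)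
    also have "\<dots> = A 0 x * B (Suc k) x + (\<Sum>i\<le>k. real (k choose Suc i) * A (Suc i) x * B (k - i) x)"
      by (subst sum.atMost_Suc_shift) simp
    finally show ?thesis .
  qed
  have "(\<Sum>i\<le>Suc k. real (Suc k choose i) * A i x * B (Suc k - i) x)
      = A 0 x * B (Suc k) x + (\<Sum>i\<le>k. real (Suc k choose Suc i) * A (Suc i) x * B (k - i) x)"
    by (subst sum.atMost_Suc_shift) simp
  also have "\<dots> = A 0 x * B (Suc k) x + (\<Sum>i\<le>k. real (k choose i) * A (Suc i) x * B (k - i) x)
       + (\<Sum>i\<le>k. real (k choose Suc i) * A (Suc i) x * B (k - i) x)"
    by (simp add: algebra_simps sum.distrib)
  also have "\<dots> = ?D"
    using s1 by (simp add: algebra_simps sum.distrib sum_distrib_left)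
  finally show ?case using eq by simp
qed



definition SS :: "(nat \<Rightarrow> real) \<Rightarrow> real set" where
  "SS a = {s. ereal (exp s) < conv_radius a}"

definition Hc :: "(nat \<Rightarrow> real) \<Rightarrow> real \<Rightarrow> nat \<Rightarrow> real \<Rightarrow> real" where
  "Hc a m j s = exp (- m * s) * (\<Sum>n. (real n - m)^j * a n * exp s ^ n)"

lemma open_SS: "open (SS a)"
proof (cases "conv_radius a")
  case (real r)
  show ?thesis
  proof (cases "r > 0")
    case True
    have "s \<in> SS a \<longleftrightarrow> s < ln r" for s
    proof -
      have "s \<in> SS a \<longleftrightarrow> exp s < r" by (simp add: SS_def real)
      also have "\<dots> \<longleftrightarrow> exp s < exp (ln r)" using True by simp
      also have "\<dots> \<longleftrightarrow> s < ln r" by (rule exp_less_cancel_iff)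
      finally show ?thesis .
    qed
    then have "SS a = {..<ln r}" by auto
    then show ?thesis by simp
  next
    case False
    have "\<not> exp s < r" for s using False exp_gt_zero[of s] by linarith
    then have "s \<notin> SS a" for s by (simp add: SS_def real)
    then have "SS a = {}" by auto
    then show ?thesis by simp
  qed
next
  case PInf then show ?thesis by (simp add: SS_def)
next
  case MInf then show ?thesis by (simp add: SS_def)
qed

lemma summ_pow:
  fixes z :: real
  assumes "ereal \<bar>z\<bar> < conv_radius a"
  shows "summable (\<lambda>n. real n ^ j * a n * z ^ n)"
  using assms
proof (induction j arbitrary: z)
  case 0
  then show ?case using summable_in_conv_radius[of z a] by simp
next
  case (Suc j)
  obtain K where K: "ereal \<bar>z\<bar> < ereal K" "ereal K < conv_radius a"
    using ereal_dense2[OF Suc.prems] by auto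
  let ?c = "\<lambda>n. real n ^ j * a n"
  have sm: "summable (\<lambda>n. ?c n * x ^ n)" if "norm x < K" for x :: real
    using Suc.IH[of x] that less_trans[of "ereal \<bar>x\<bar>" "ereal K" "conv_radius a"] K by (auto simp: mult.assoc)
  have "summable (\<lambda>n. diffs ?c n * z ^ n)"
    by (rule termdiff_converges[of z K]) (use K sm in auto)
  from diffs_equiv[OF this] have "(\<lambda>n. real n * ?c n * z ^ (n - Suc 0)) sums (\<Sum>n. diffs ?c n * z ^ n)"
    by simp
  from sums_mult2[OF this, of z] have "summable (\<lambda>n. real n * ?c n * z ^ (n - Suc 0) * z)"
    by (rule sums_summable)
  moreover have "real n * ?c n * z ^ (n - Suc 0) * z = real n ^ Suc j * a n * z ^ n" for n
    by (cases n) (auto simp: algebra_simps)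
  ultimately show ?case by simp
qed

lemma pow_diff_bound:
  fixes x m :: real assumes "x \<ge> 0"
  shows "\<bar>x - m\<bar> ^ j \<le> 2 ^ j * (x ^ j + \<bar>m\<bar> ^ j)"
proof -
  have "\<bar>x - m\<bar> \<le> 2 * max x \<bar>m\<bar>" using assms by auto
  then have "\<bar>x - m\<bar> ^ j \<le> (2 * max x \<bar>m\<bar>) ^ j" by (rule power_mono) simp
  also have "\<dots> = 2 ^ j * max x \<bar>m\<bar> ^ j" by (simp add: power_mult_distrib)
  also have "max x \<bar>m\<bar> ^ j \<le> x ^ j + \<bar>m\<bar> ^ j"
    using assms by (cases "x \<le> \<bar>m\<bar>") (auto simp: max_def)
  finally show ?thesis by simp
qed

lemma summ_c:
  fixes z :: real
  assumes "ereal \<bar>z\<bar> < conv_radius a"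
  shows "summable (\<lambda>n. (real n - m) ^ j * a n * z ^ n)"
proof (rule summable_comparison_test)
  have z: "ereal \<bar>\<bar>z\<bar>\<bar> < conv_radius (\<lambda>n. norm (a n))" using assms conv_radius_norm[of a] by simp
  have s1: "summable (\<lambda>n. real n ^ j * norm (a n) * \<bar>z\<bar> ^ n)" by (rule summ_pow[OF z])
  have s0: "summable (\<lambda>n. real n ^ 0 * norm (a n) * \<bar>z\<bar> ^ n)" by (rule summ_pow[OF z])
  show "summable (\<lambda>n. 2 ^ j * (real n ^ j * norm (a n) * \<bar>z\<bar> ^ n) + 2 ^ j * \<bar>m\<bar> ^ j * (norm (a n) * \<bar>z\<bar> ^ n))"
    using s1 s0 by (intro summable_add summable_mult) auto
  show "\<exists>N. \<forall>n\<ge>N. norm ((real n - m) ^ j * a n * z ^ n) \<le>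
      2 ^ j * (real n ^ j * norm (a n) * \<bar>z\<bar> ^ n) + 2 ^ j * \<bar>m\<bar> ^ j * (norm (a n) * \<bar>z\<bar> ^ n)"
  proof (intro exI allI impI)
    fix n :: nat
    have "norm ((real n - m) ^ j * a n * z ^ n) = \<bar>real n - m\<bar> ^ j * (norm (a n) * \<bar>z\<bar> ^ n)"
      by (simp add: abs_mult power_abs)
    also have "\<dots> \<le> (2 ^ j * (real n ^ j + \<bar>m\<bar> ^ j)) * (norm (a n) * \<bar>z\<bar> ^ n)"
      by (intro mult_right_mono pow_diff_bound) auto
    also have "\<dots> = 2 ^ j * (real n ^ j * norm (a n) * \<bar>z\<bar> ^ n) + 2 ^ j * \<bar>m\<bar> ^ j * (norm (a n) * \<bar>z\<bar> ^ n)"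
      by (simp only: distrib_left distrib_right mult.assoc)
    finally show "norm ((real n - m) ^ j * a n * z ^ n) \<le>
      2 ^ j * (real n ^ j * norm (a n) * \<bar>z\<bar> ^ n) + 2 ^ j * \<bar>m\<bar> ^ j * (norm (a n) * \<bar>z\<bar> ^ n)" .
  qed
qed

lemma Hc_deriv:
  assumes s: "s \<in> SS a"
  shows "(Hc a m j has_real_derivative Hc a m (Suc j) s) (at s)"
proof -
  define x where "x = exp s"
  have x: "x > 0" "ereal x < conv_radius a" using s by (auto simp: x_def SS_def)
  obtain K where K: "ereal x < ereal K" "ereal K < conv_radius a"
    using ereal_dense2[OF x(2)] by auto
  define c where "c = (\<lambda>n. (real n - m) ^ j * a n)"
  have sm: "summable (\<lambda>n. c n * z ^ n)" if "norm z < K" for z :: real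
    using summ_c[of z a m j] that K less_trans[of "ereal \<bar>z\<bar>" "ereal K" "conv_radius a"] unfolding c_def by (auto simp: mult.assoc)
  have sx: "summable (\<lambda>n. c n * x ^ n)" using sm[of x] K x by auto
  have d1: "((\<lambda>z. \<Sum>n. c n * z ^ n) has_real_derivative (\<Sum>n. diffs c n * x ^ n)) (at x)"
    by (rule termdiffs_strong'[of K]) (use sm K x in auto)
  have "summable (\<lambda>n. diffs c n * x ^ n)"
    by (rule termdiff_converges[of x K]) (use K sm x in auto)
  from diffs_equiv[OF this] have "(\<lambda>n. real n * c n * x ^ (n - Suc 0)) sums (\<Sum>n. diffs c n * x ^ n)"
    by simp
  note s0 = this
  have eqn: "(\<lambda>n. real n * c n * x ^ (n - Suc 0) * x) = (\<lambda>n. real n * c n * x ^ n)"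
  proof (rule ext)
    fix n show "real n * c n * x ^ (n - Suc 0) * x = real n * c n * x ^ n"
      by (cases n) (auto simp: algebra_simps)
  qed
  have sums1: "(\<lambda>n. real n * c n * x ^ n) sums ((\<Sum>n. diffs c n * x ^ n) * x)"
    using sums_mult2[OF s0, of x] unfolding eqn .
  have d2: "((\<lambda>s. \<Sum>n. c n * exp s ^ n) has_real_derivative (\<Sum>n. diffs c n * x ^ n) * x) (at s)"
    using DERIV_chain2[OF d1[unfolded x_def] DERIV_exp[of s]] by (simp add: x_def)
  have d3: "((\<lambda>s. exp (- m * s) * (\<Sum>n. c n * exp s ^ n)) has_real_derivative
      exp (- m * s) * (- m) * (\<Sum>n. c n * x ^ n) + exp (- m * s) * ((\<Sum>n. diffs c n * x ^ n) * x)) (at s)"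
  proof -
    have de: "((\<lambda>s. exp (- m * s)) has_real_derivative exp (- m * s) * (- m)) (at s)"
      by (auto intro!: derivative_eq_intros)
    from DERIV_mult[OF de d2] show ?thesis by (simp add: x_def algebra_simps)
  qed
  have q1: "(\<Sum>n. real n * c n * x ^ n) = (\<Sum>n. diffs c n * x ^ n) * x"
    using sums_unique[OF sums1] by simp
  have q2: "(\<Sum>n. m * (c n * x ^ n)) = m * (\<Sum>n. c n * x ^ n)"
    by (rule suminf_mult[OF sx])
  have q3: "(\<Sum>n. real n * c n * x ^ n) - (\<Sum>n. m * (c n * x ^ n)) = (\<Sum>n. real n * c n * x ^ n - m * (c n * x ^ n))"
    using sums_summable[OF sums1] summable_mult[OF sx, of m] by (rule suminf_diff)
  have q4: "real n * c n * x ^ n - m * (c n * x ^ n) = (real n - m) ^ Suc j * a n * exp s ^ n" for n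
    unfolding c_def x_def by (simp add: algebra_simps)
  have eqD: "exp (- m * s) * (- m) * (\<Sum>n. c n * x ^ n) + exp (- m * s) * ((\<Sum>n. diffs c n * x ^ n) * x)
      = Hc a m (Suc j) s"
  proof -
    have "exp (- m * s) * (- m) * (\<Sum>n. c n * x ^ n) + exp (- m * s) * ((\<Sum>n. diffs c n * x ^ n) * x)
      = exp (- m * s) * ((\<Sum>n. real n * c n * x ^ n) - (\<Sum>n. m * (c n * x ^ n)))"
      unfolding q1 q2 by (simp add: algebra_simps)
    also have "\<dots> = exp (- m * s) * (\<Sum>n. (real n - m) ^ Suc j * a n * exp s ^ n)"
      unfolding q3 q4 ..
    finally show ?thesis unfolding Hc_def .
  qed
  have hj: "Hc a m j = (\<lambda>s. exp (- m * s) * (\<Sum>n. c n * exp s ^ n))"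
    by (rule ext) (simp add: Hc_def c_def)
  show ?thesis unfolding hj eqD[symmetric] by (rule d3)
qed



lemma psum_Hc: "psum a (exp s) = Hc a 0 0 s"
  by (simp add: psum_def Hc_def)

lemma summable_psum: "s \<in> SS a \<Longrightarrow> summable (\<lambda>n. a n * exp s ^ n)"
  using summable_in_conv_radius[of "exp s" a] by (simp add: SS_def)

lemma psum_pos:
  assumes nn: "\<And>n. a n \<ge> 0" and a0: "a 0 > 0" and s: "s \<in> SS a"
  shows "psum a (exp s) > 0"
  unfolding psum_def
  by (rule suminf_pos2[of _ 0]) (use summable_psum[OF s] nn a0 in auto)

lemma Hc_Ck:
  assumes "s \<in> SS a"
  shows "(deriv ^^ k) (Hc a m 0) s = Hc a m k s"
  using Ck_seq[OF open_SS, where G="Hc a m" and k=k] Hc_deriv assms by blast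

lemma fulcrum_eq: "fulcrum a = (\<lambda>x. ln (Hc a 0 0 x))"
  by (rule ext) (simp add: fulcrum_def psum_Hc)

lemma fulcrum_Ck:
  assumes nn: "\<And>n. a n \<ge> 0" and a0: "a 0 > 0"
  shows "Ck k (SS a) (fulcrum a)"
proof (cases k)
  case 0 then show ?thesis by simp
next
  case (Suc k')
  have G: "Ck (Suc k') (SS a) (Hc a 0 0)"
    using Ck_seq[OF open_SS, where G="Hc a 0" and k="Suc k'"] Hc_deriv by blast
  have pos: "\<And>x. x \<in> SS a \<Longrightarrow> Hc a 0 0 x > 0" using psum_pos[where a=a, OF nn a0] by (simp add: psum_Hc)
  show ?thesis unfolding Suc fulcrum_eq by (rule Ck_ln[OF open_SS pos G])
qed

lemma F_smooth:
  assumes nn: "\<And>n. a n \<ge> 0" and a0: "a 0 > 0" and s: "s \<in> SS a"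
  shows "((deriv ^^ k) (fulcrum a) has_real_derivative (deriv ^^ Suc k) (fulcrum a) s) (at s)"
  by (rule Ck_smooth[OF fulcrum_Ck[where a=a, OF nn a0] s])

lemma F1_mean:
  assumes nn: "\<And>n. a n \<ge> 0" and a0: "a 0 > 0" and s: "s \<in> SS a"
  shows "(deriv ^^ Suc 0) (fulcrum a) s = mean_f a (exp s)"
proof -
  have pos: "Hc a 0 0 s > 0" using psum_pos[where a=a, OF nn a0 s] by (simp add: psum_Hc)
  have "((\<lambda>x. ln (Hc a 0 0 x)) has_real_derivative Hc a 0 (Suc 0) s / Hc a 0 0 s) (at s)"
    using DERIV_ln_divide[OF pos] Hc_deriv[OF s, of 0 0] DERIV_chain2 
    by (auto intro!: derivative_eq_intros Hc_deriv[OF s] simp: pos field_simps)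
  then have "deriv (fulcrum a) s = Hc a 0 (Suc 0) s / Hc a 0 0 s"
    unfolding fulcrum_eq by (rule DERIV_imp_deriv)
  then show ?thesis by (simp add: mean_f_def Hc_def psum_def)
qed

definition mom :: "(nat \<Rightarrow> real) \<Rightarrow> nat \<Rightarrow> real \<Rightarrow> real" where
  "mom a j s = (\<Sum>n. (real n - mean_f a (exp s)) ^ j * a n * exp s ^ n) / psum a (exp s)"

lemma mom_rec:
  assumes nn: "\<And>n. a n \<ge> 0" and a0: "a 0 > 0" and s: "s \<in> SS a"
  shows "mom a (Suc k) s = (\<Sum>i\<le>k. real (k choose i) *
            (if i = 0 then 0 else (deriv ^^ Suc i) (fulcrum a) s) * mom a (k - i) s)"
proof -
  define m where "m = mean_f a (exp s)"
  define F where "F = fulcrum a"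
  define A where "A = (\<lambda>i y. (deriv ^^ Suc i) F y - (if i = 0 then m else 0))"
  have dA: "(A i has_real_derivative A (Suc i) y) (at y)" if "y \<in> SS a" for i y
    using DERIV_diff[OF F_smooth[where a=a, OF nn a0 that, of "Suc i"] DERIV_const[of "if i = 0 then m else 0"]]
    by (simp add: A_def F_def)
  have dB: "(Hc a m i has_real_derivative Hc a m (Suc i) y) (at y)" if "y \<in> SS a" for i y
    by (rule Hc_deriv[OF that])
  have C0: "Hc a m (Suc 0) y = A 0 y * Hc a m 0 y" if y: "y \<in> SS a" for y
  proof -
    have eq: "Hc a m 0 x = exp (F x - m * x)" if "x \<in> SS a" for x
    proof -
      have "Hc a m 0 x = exp (- m * x) * psum a (exp x)" by (simp add: Hc_def psum_def)
      also have "psum a (exp x) = exp (F x)"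
        using psum_pos[where a=a, OF nn a0 that] by (simp add: F_def fulcrum_def)
      finally show ?thesis by (simp add: exp_add[symmetric])
    qed
    have d0: "(F has_real_derivative (deriv ^^ Suc 0) F y) (at y)"
      using F_smooth[where a=a, OF nn a0 y, of 0] by (simp add: F_def)
    have "((\<lambda>x. exp (F x - m * x)) has_real_derivative exp (F y - m * y) * ((deriv ^^ Suc 0) F y - m)) (at y)"
      by (auto intro!: derivative_eq_intros d0)
    then have "(Hc a m 0 has_real_derivative exp (F y - m * y) * ((deriv ^^ Suc 0) F y - m)) (at y)"
      by (rule has_field_derivative_transform_within_open[OF _ open_SS y]) (simp add: eq)
    from DERIV_unique[OF dB[OF y, of 0] this] show ?thesis
      using eq[OF y] by (simp add: A_def)
  qed
  have L: "Hc a m (Suc k) y = (\<Sum>i\<le>k. real (k choose i) * A i y * Hc a m (k - i) y)" if "y \<in> SS a" for y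
    using leibniz_seq[OF open_SS, where A=A and B="Hc a m" and C="\<lambda>j. Hc a m (Suc j)", OF dA dB dB C0 that] by simp
  define E where "E = exp (- m * s) * psum a (exp s)"
  have E: "E > 0" using psum_pos[where a=a, OF nn a0 s] by (simp add: E_def)
  have H: "Hc a m j s = E * mom a j s" for j
    using E psum_pos[where a=a, OF nn a0 s] by (simp add: Hc_def mom_def E_def m_def)
  have A0: "A i s = (if i = 0 then 0 else (deriv ^^ Suc i) (fulcrum a) s)" for i
    using F1_mean[where a=a, OF nn a0 s] by (simp add: A_def F_def m_def)
  have "E * mom a (Suc k) s = E * (\<Sum>i\<le>k. real (k choose i) *
            (if i = 0 then 0 else (deriv ^^ Suc i) (fulcrum a) s) * mom a (k - i) s)"
    using L[OF s] unfolding H A0 by (simp add: sum_distrib_left algebra_simps)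
  then show ?thesis using E by simp
qed

lemma mom0:
  assumes nn: "\<And>n. a n \<ge> 0" and a0: "a 0 > 0" and s: "s \<in> SS a"
  shows "mom a 0 s = 1"
  using psum_pos[where a=a, OF nn a0 s] by (simp add: mom_def psum_def)

lemma mom1:
  assumes nn: "\<And>n. a n \<ge> 0" and a0: "a 0 > 0" and s: "s \<in> SS a"
  shows "mom a 1 s = 0"
  using mom_rec[where a=a, OF nn a0 s, of 0] by simp

lemma mom2:
  assumes nn: "\<And>n. a n \<ge> 0" and a0: "a 0 > 0" and s: "s \<in> SS a"
  shows "mom a 2 s = (deriv ^^ 2) (fulcrum a) s"
  using mom_rec[where a=a, OF nn a0 s, of 1] mom0[where a=a, OF nn a0 s] by (simp add: numeral_2_eq_2)

lemma var_mom: "var_f a (exp s) = mom a 2 s"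
  by (simp add: var_f_def mom_def)

lemma var_pos:
  assumes nn: "\<And>n. a n \<ge> 0" and a0: "a 0 > 0" and n0: "n0 > 0" "a n0 \<noteq> 0" and s: "s \<in> SS a"
  shows "var_f a (exp s) > 0"
proof -
  define m where "m = mean_f a (exp s)"
  have sm: "summable (\<lambda>n. (real n - m) ^ 2 * a n * exp s ^ n)"
    using summ_c[of "exp s" a m 2] s by (simp add: SS_def)
  have nnt: "0 \<le> (real n - m) ^ 2 * a n * exp s ^ n" for n using nn[of n] by simp
  have "0 < (\<Sum>n. (real n - m) ^ 2 * a n * exp s ^ n)"
  proof (cases "m = 0")
    case True
    have "a n0 > 0" using nn[of n0] n0 by simp
    then show ?thesis using True n0 by (intro suminf_pos2[OF sm nnt, of n0]) simp
  next
    case False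
    then show ?thesis using a0 by (intro suminf_pos2[OF sm nnt, of 0]) simp
  qed
  then show ?thesis using psum_pos[where a=a, OF nn a0 s] by (simp add: var_f_def m_def)
qed



lemma ptwise_bound:
  fixes x T :: real
  assumes T: "T \<ge> 1" and ev: "even n" and kn: "k < n"
  shows "\<bar>x ^ k - (max (- T) (min T x)) ^ k\<bar> \<le> 2 * x ^ n / T ^ (n - k)"
proof -
  have xn: "x ^ n = \<bar>x\<bar> ^ n" using ev by (simp add: power_even_abs)
  have Tp: "T ^ (n - k) > 0" using T by simp
  show ?thesis
  proof (cases "\<bar>x\<bar> \<le> T")
    case True
    then have "max (- T) (min T x) = x" by auto
    then show ?thesis using Tp by (simp add: xn)
  next
    case False
    have c: "\<bar>max (- T) (min T x)\<bar> \<le> \<bar>x\<bar>" using False T by auto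
    have "\<bar>x ^ k - (max (- T) (min T x)) ^ k\<bar> \<le> \<bar>x\<bar> ^ k + \<bar>max (- T) (min T x)\<bar> ^ k"
      by (metis abs_triangle_ineq4 power_abs)
    also have "\<dots> \<le> 2 * \<bar>x\<bar> ^ k" using power_mono[OF c, of k] by simp
    also have "\<bar>x\<bar> ^ k * T ^ (n - k) \<le> \<bar>x\<bar> ^ k * \<bar>x\<bar> ^ (n - k)"
      using False T by (intro mult_left_mono power_mono) auto
    then have "\<bar>x\<bar> ^ k * T ^ (n - k) \<le> \<bar>x\<bar> ^ n"
      using kn by (simp add: power_add[symmetric])
    then have "2 * \<bar>x\<bar> ^ k \<le> 2 * \<bar>x\<bar> ^ n / T ^ (n - k)"
      using Tp by (simp add: field_simps)
    finally show ?thesis by (simp add: xn)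
  qed
qed

lemma moment_integrable:
  assumes P: "real_distribution P" and ev: "even n" and kn: "k \<le> n"
    and int: "integrable P (\<lambda>x. x ^ n)"
  shows "integrable P (\<lambda>x::real. x ^ k)"
proof -
  interpret P: real_distribution P by fact
  have "integrable P (\<lambda>x. 1 + x ^ n)" using int by (intro Bochner_Integration.integrable_add) auto
  then show ?thesis
  proof (rule Bochner_Integration.integrable_bound)
    show "(\<lambda>x. x ^ k) \<in> borel_measurable P" by simp
    show "AE x in P. norm (x ^ k) \<le> norm (1 + x ^ n)"
    proof (intro AE_I2)
      fix x :: real
      have xn: "x ^ n = \<bar>x\<bar> ^ n" using ev by (simp add: power_even_abs)
      have "\<bar>x\<bar> ^ k \<le> 1 + \<bar>x\<bar> ^ n"
      proof (cases "\<bar>x\<bar> \<le> 1")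
        case True then have "\<bar>x\<bar> ^ k \<le> 1" by (simp add: power_le_one)
        then show ?thesis by (smt (verit) zero_le_power abs_ge_zero)
      next
        case False then have "\<bar>x\<bar> ^ k \<le> \<bar>x\<bar> ^ n" using kn by (intro power_increasing) auto
        then show ?thesis by simp
      qed
      then show "norm (x ^ k) \<le> norm (1 + x ^ n)" by (simp add: xn power_abs)
    qed
  qed
qed

lemma trunc_err:
  assumes P: "real_distribution P" and ev: "even n" and kn: "k < n" and T: "T \<ge> 1"
    and int: "integrable P (\<lambda>x. x ^ n)"
  shows "\<bar>integral\<^sup>L P (\<lambda>x::real. x ^ k) - integral\<^sup>L P (\<lambda>x. (max (- T) (min T x)) ^ k)\<bar>
          \<le> 2 / T ^ (n - k) * integral\<^sup>L P (\<lambda>x. x ^ n)"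
proof -
  interpret P: real_distribution P by fact
  let ?h = "\<lambda>x::real. (max (- T) (min T x)) ^ k"
  have ik: "integrable P (\<lambda>x::real. x ^ k)" using moment_integrable[OF P ev _ int, of k] kn by simp
  have ih: "integrable P ?h"
  proof (rule Bochner_Integration.integrable_bound)
    show "integrable P (\<lambda>x. T ^ k)" by simp
    show "?h \<in> borel_measurable P" by simp
    show "AE x in P. norm (?h x) \<le> norm (T ^ k)"
    proof (intro AE_I2)
      fix x :: real
      have "\<bar>max (- T) (min T x)\<bar> \<le> T" using T by auto
      then have "\<bar>max (- T) (min T x)\<bar> ^ k \<le> T ^ k" by (rule power_mono) simp
      then show "norm (?h x) \<le> norm (T ^ k)" using T by (simp add: power_abs)
    qed
  qed
  have "\<bar>integral\<^sup>L P (\<lambda>x. x ^ k) - integral\<^sup>L P ?h\<bar> = \<bar>integral\<^sup>L P (\<lambda>x. x ^ k - ?h x)\<bar>"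
    using ik ih by (simp add: Bochner_Integration.integral_diff)
  also have "\<dots> \<le> integral\<^sup>L P (\<lambda>x. \<bar>x ^ k - ?h x\<bar>)" by (rule integral_abs_bound)
  also have "\<dots> \<le> integral\<^sup>L P (\<lambda>x. 2 / T ^ (n - k) * x ^ n)"
    using ik ih int ptwise_bound[OF T ev kn]
    by (intro Bochner_Integration.integral_mono) (auto intro!: integrable_abs Bochner_Integration.integrable_diff)
  also have "\<dots> = 2 / T ^ (n - k) * integral\<^sup>L P (\<lambda>x. x ^ n)" by simp
  finally show ?thesis .
qed

lemma trunc_moment:
  fixes M :: "nat \<Rightarrow> real measure" and N :: "real measure"
  assumes distr: "\<And>i. real_distribution (M i)" and dN: "real_distribution N"
    and wc: "weak_conv_m M N" and ev: "even n" and kn: "k < n"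
    and intM: "\<And>i. integrable (M i) (\<lambda>x. x ^ n)" and intN: "integrable N (\<lambda>x. x ^ n)"
    and bd: "eventually (\<lambda>i. integral\<^sup>L (M i) (\<lambda>x. x ^ n) \<le> B) sequentially"
  shows "(\<lambda>i. integral\<^sup>L (M i) (\<lambda>x. x ^ k)) \<longlonglongrightarrow> integral\<^sup>L N (\<lambda>x. x ^ k)"
proof (rule tendstoI)
  fix e :: real assume e: "e > 0"
  interpret N: real_distribution N by fact
  have IN: "integral\<^sup>L N (\<lambda>x. x ^ n) \<ge> 0"
    using ev by (intro Bochner_Integration.integral_nonneg) (simp add: zero_le_even_power)
  define C where "C = max B 0 + integral\<^sup>L N (\<lambda>x. x ^ n)"
  have C: "C \<ge> 0" using IN by (simp add: C_def)
  define T where "T = max 1 (6 * C / e + 1)"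
  have T1: "T \<ge> 1" by (simp add: T_def)
  have "T ^ (n - k) \<ge> T ^ 1" using T1 kn by (intro power_increasing) auto
  moreover have "6 * C / e + 1 \<le> T" by (simp add: T_def)
  ultimately have Tbig: "T ^ (n - k) > 6 * C / e" by simp
  have Tp: "T ^ (n - k) > 0" using T1 by simp
  have small: "2 * C / T ^ (n - k) < e / 3"
  proof -
    have "6 * C < e * T ^ (n - k)" using Tbig e by (simp add: pos_divide_less_eq mult.commute)
    then have "2 * C < e / 3 * T ^ (n - k)" by simp
    then show ?thesis using Tp by (simp add: pos_divide_less_eq)
  qed
  let ?h = "\<lambda>x::real. (max (- T) (min T x)) ^ k"
  have hb: "norm (?h x) \<le> T ^ k" for x
  proof -
    have "\<bar>max (- T) (min T x)\<bar> \<le> T" using T1 by auto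
    then have "\<bar>max (- T) (min T x)\<bar> ^ k \<le> T ^ k" by (rule power_mono) simp
    then show ?thesis by (simp add: power_abs)
  qed
  have conv: "(\<lambda>i. integral\<^sup>L (M i) ?h) \<longlonglongrightarrow> integral\<^sup>L N ?h"
    by (rule weak_conv_imp_integral_bdd_continuous_conv[OF distr dN wc _ hb]) (intro continuous_intros)
  have ev1: "eventually (\<lambda>i. dist (integral\<^sup>L (M i) ?h) (integral\<^sup>L N ?h) < e / 3) sequentially"
    using conv e by (intro tendstoD) auto
  show "eventually (\<lambda>i. dist (integral\<^sup>L (M i) (\<lambda>x. x ^ k)) (integral\<^sup>L N (\<lambda>x. x ^ k)) < e) sequentially"
    using ev1 bd
  proof eventually_elim
    case (elim i)
    have eM: "\<bar>integral\<^sup>L (M i) (\<lambda>x. x ^ k) - integral\<^sup>L (M i) ?h\<bar> \<le> 2 / T ^ (n - k) * integral\<^sup>L (M i) (\<lambda>x. x ^ n)"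
      by (rule trunc_err[OF distr ev kn T1 intM])
    have eN: "\<bar>integral\<^sup>L N (\<lambda>x. x ^ k) - integral\<^sup>L N ?h\<bar> \<le> 2 / T ^ (n - k) * integral\<^sup>L N (\<lambda>x. x ^ n)"
      by (rule trunc_err[OF dN ev kn T1 intN])
    define IM where "IM = integral\<^sup>L (M i) (\<lambda>x. x ^ n)"
    define IN where "IN = integral\<^sup>L N (\<lambda>x. x ^ n)"
    define c where "c = 2 / T ^ (n - k)"
    have c0: "c \<ge> 0" using Tp by (simp add: c_def)
    have "IM + IN \<le> C" using elim(2) by (simp add: C_def IM_def IN_def)
    then have "c * (IM + IN) \<le> c * C" using c0 by (rule mult_left_mono)
    also have "c * C < e / 3" using small by (simp add: c_def)
    finally have S: "c * IM + c * IN < e / 3" by (simp add: distrib_left)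
    let ?A = "integral\<^sup>L (M i) (\<lambda>x. x ^ k)" and ?B = "integral\<^sup>L N (\<lambda>x. x ^ k)"
    let ?hA = "integral\<^sup>L (M i) ?h" and ?hN = "integral\<^sup>L N ?h"
    have t: "\<bar>?A - ?B\<bar> \<le> \<bar>?A - ?hA\<bar> + \<bar>?hA - ?hN\<bar> + \<bar>?B - ?hN\<bar>"
      using abs_triangle_ineq[of "?A - ?hA" "?hA - ?B"] abs_triangle_ineq[of "?hA - ?hN" "?hN - ?B"]
        abs_minus_commute[of ?B ?hN] by simp
    have d: "\<bar>?hA - ?hN\<bar> < e / 3" using elim(1) by (simp add: dist_real_def)
    have "\<bar>?A - ?B\<bar> < e" using t d eM eN S unfolding IM_def[symmetric] IN_def[symmetric] c_def[symmetric]
      by linarith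
    then show ?case by (simp add: dist_real_def)
  qed
qed



definition ww :: "(nat \<Rightarrow> real) \<Rightarrow> real \<Rightarrow> nat \<Rightarrow> real" where
  "ww a s n = a n * exp s ^ n / psum a (exp s)"

definition yy :: "(nat \<Rightarrow> real) \<Rightarrow> real \<Rightarrow> nat \<Rightarrow> real" where
  "yy a s n = (real n - mean_f a (exp s)) / sqrt (var_f a (exp s))"

definition Ms :: "(nat \<Rightarrow> real) \<Rightarrow> real \<Rightarrow> real measure" where
  "Ms a s = distr (density (count_space UNIV) (\<lambda>n. ennreal (ww a s n))) borel (yy a s)"

definition nm :: "(nat \<Rightarrow> real) \<Rightarrow> nat \<Rightarrow> real \<Rightarrow> real" where
  "nm a k s = (\<Sum>n. ww a s n * yy a s n ^ k)"

locale good =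
  fixes a :: "nat \<Rightarrow> real" and s :: real
  assumes nn: "\<And>n. a n \<ge> 0" and a0: "a 0 > 0" and s: "s \<in> SS a" and vp: "var_f a (exp s) > 0"
begin

lemma P_pos: "psum a (exp s) > 0" by (rule psum_pos[where a=a, OF nn a0 s])

lemma ww_nn: "ww a s n \<ge> 0" using P_pos nn[of n] by (simp add: ww_def)

lemma ww_sums: "ww a s sums 1"
proof -
  have "(\<lambda>n. a n * exp s ^ n / psum a (exp s)) sums (psum a (exp s) / psum a (exp s))"
    using summable_psum[OF s] unfolding psum_def by (intro sums_divide summable_sums)
  then show ?thesis using P_pos unfolding ww_def[abs_def] by simp
qed

lemma ww_summable: "summable (ww a s)" using ww_sums by (rule sums_summable)

lemma summ_abs_mom: "summable (\<lambda>n. \<bar>real n - m\<bar> ^ k * a n * exp s ^ n)"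
proof (rule summable_comparison_test)
  have z: "ereal \<bar>exp s\<bar> < conv_radius a" using s by (simp add: SS_def)
  show "summable (\<lambda>n. (real n - m) ^ 0 * a n * exp s ^ n + (real n - m) ^ (2 * k) * a n * exp s ^ n)"
    by (intro summable_add summ_c z)
  show "\<exists>N. \<forall>n\<ge>N. norm (\<bar>real n - m\<bar> ^ k * a n * exp s ^ n) \<le>
      (real n - m) ^ 0 * a n * exp s ^ n + (real n - m) ^ (2 * k) * a n * exp s ^ n"
  proof (intro exI allI impI)
    fix n :: nat
    have t: "\<bar>real n - m\<bar> ^ k \<le> 1 + (real n - m) ^ (2 * k)"
    proof (cases "\<bar>real n - m\<bar> \<le> 1")
      case True
      then have "\<bar>real n - m\<bar> ^ k \<le> 1" by (simp add: power_le_one)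
      moreover have "(real n - m) ^ (2 * k) \<ge> 0" by (simp add: power_mult)
      ultimately show ?thesis by linarith
    next
      case False
      then have "\<bar>real n - m\<bar> ^ k \<le> \<bar>real n - m\<bar> ^ (2 * k)" by (intro power_increasing) auto
      also have "\<dots> = (real n - m) ^ (2 * k)" by (simp add: power_even_abs)
      finally show ?thesis by simp
    qed
    have p: "a n * exp s ^ n \<ge> 0" using nn[of n] by simp
    have "norm (\<bar>real n - m\<bar> ^ k * a n * exp s ^ n) = \<bar>real n - m\<bar> ^ k * (a n * exp s ^ n)"
      using p nn[of n] by (simp add: abs_mult mult.assoc)
    also have "\<dots> \<le> (1 + (real n - m) ^ (2 * k)) * (a n * exp s ^ n)" using t p by (rule mult_right_mono)
    finally show "norm (\<bar>real n - m\<bar> ^ k * a n * exp s ^ n) \<le>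
      (real n - m) ^ 0 * a n * exp s ^ n + (real n - m) ^ (2 * k) * a n * exp s ^ n"
      by (simp add: distrib_right mult.assoc)
  qed
qed

lemma prob_density: "prob_space (density (count_space UNIV) (\<lambda>n. ennreal (ww a s n)))"
proof (rule prob_spaceI)
  have "emeasure (density (count_space UNIV) (\<lambda>n. ennreal (ww a s n))) UNIV = (\<Sum>n. ennreal (ww a s n))"
    by (simp add: emeasure_density nn_integral_count_space_nat)
  also have "\<dots> = ennreal (\<Sum>n. ww a s n)" using ww_summable ww_nn by (intro suminf_ennreal2) auto
  also have "\<dots> = 1" using sums_unique[OF ww_sums] by simp
  finally show "emeasure (density (count_space UNIV) (\<lambda>n. ennreal (ww a s n)))
      (space (density (count_space UNIV) (\<lambda>n. ennreal (ww a s n)))) = 1" by simp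
qed

lemma Ms_dist: "real_distribution (Ms a s)"
proof -
  have "prob_space (Ms a s)" unfolding Ms_def
    by (rule prob_space.prob_space_distr[OF prob_density]) simp
  then show ?thesis by (simp add: real_distribution_def real_distribution_axioms_def Ms_def)
qed

lemma Ms_integral:
  assumes f: "f \<in> borel_measurable borel" and sm: "summable (\<lambda>n. ww a s n * \<bar>f (yy a s n)\<bar>)"
  shows "integrable (Ms a s) f" "integral\<^sup>L (Ms a s) f = (\<Sum>n. ww a s n * f (yy a s n))"
proof -
  have meas: "yy a s \<in> density (count_space UNIV) (\<lambda>n. ennreal (ww a s n)) \<rightarrow>\<^sub>M borel" by simp
  have ic: "integrable (count_space UNIV) (\<lambda>n. ww a s n * f (yy a s n))"
    unfolding integrable_count_space_nat_iff using sm ww_nn by (simp add: abs_mult)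
  show "integrable (Ms a s) f" unfolding Ms_def
    by (subst integrable_distr_eq[OF meas f], subst integrable_density) (use ic ww_nn in auto)
  show "integral\<^sup>L (Ms a s) f = (\<Sum>n. ww a s n * f (yy a s n))" unfolding Ms_def
    using ic ww_nn by (simp add: integral_distr[OF meas f] integral_density integral_count_space_nat)
qed

lemma Ms_cdf: "cdf (Ms a s) x = cdf_normalized a (exp s) x"
proof -
  have sm: "summable (\<lambda>n. ww a s n * \<bar>indicator {..x} (yy a s n) :: real\<bar>)"
    by (rule summable_comparison_test[OF _ ww_summable]) (auto simp: ww_nn indicator_def)
  have "cdf (Ms a s) x = integral\<^sup>L (Ms a s) (indicator {..x})"
    using Ms_dist by (simp add: cdf_def real_distribution_def real_distribution_axioms_def)
  also have "\<dots> = (\<Sum>n. ww a s n * indicator {..x} (yy a s n))"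
    by (rule Ms_integral(2)[OF _ sm]) simp
  also have "\<dots> = (\<Sum>n. (if yy a s n \<le> x then a n * exp s ^ n else 0) / psum a (exp s))"
    by (rule arg_cong[where f=suminf], rule ext) (simp add: ww_def indicator_def)
  also have "\<dots> = (\<Sum>n. (if yy a s n \<le> x then a n * exp s ^ n else 0)) / psum a (exp s)"
  proof (rule suminf_divide)
    show "summable (\<lambda>n. if yy a s n \<le> x then a n * exp s ^ n else 0)"
      by (rule summable_comparison_test[OF _ summable_psum[OF s]]) (auto simp: nn)
  qed
  finally show ?thesis by (simp add: cdf_normalized_def yy_def)
qed

lemma nm_summable: "summable (\<lambda>n. ww a s n * \<bar>yy a s n ^ k\<bar>)"
proof -
  have "(\<lambda>n. ww a s n * \<bar>yy a s n ^ k\<bar>) =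
      (\<lambda>n. \<bar>real n - mean_f a (exp s)\<bar> ^ k * a n * exp s ^ n / (psum a (exp s) * sqrt (var_f a (exp s)) ^ k))"
    using vp by (intro ext) (simp add: ww_def yy_def abs_mult power_abs power_divide mult_ac)
  then show ?thesis by (simp only:) (rule summable_divide[OF summ_abs_mom])
qed

lemma Ms_moment:
  "integrable (Ms a s) (\<lambda>x. x ^ k)" "integral\<^sup>L (Ms a s) (\<lambda>x. x ^ k) = nm a k s"
  using Ms_integral[of "\<lambda>x. x ^ k"] nm_summable by (auto simp: nm_def)

lemma nm_mom: "nm a k s = mom a k s / sqrt (var_f a (exp s)) ^ k"
proof -
  have sm: "summable (\<lambda>n. (real n - mean_f a (exp s)) ^ k * a n * exp s ^ n)"
    using summ_c[of "exp s" a] s by (simp add: SS_def)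
  have "(\<lambda>n. ww a s n * yy a s n ^ k) =
      (\<lambda>n. (real n - mean_f a (exp s)) ^ k * a n * exp s ^ n / (psum a (exp s) * sqrt (var_f a (exp s)) ^ k))"
    by (rule ext) (simp add: ww_def yy_def power_divide mult_ac)
  then show ?thesis unfolding nm_def using suminf_divide[OF sm] by (simp add: mom_def)
qed

end

lemma normal_cdf: "cdf std_normal_distribution x = Phi x"
proof -
  have "cdf std_normal_distribution x = integral\<^sup>L std_normal_distribution (indicator {..x})"
    by (simp add: cdf_def)
  also have "\<dots> = integral\<^sup>L lborel (\<lambda>y. std_normal_density y * indicator {..x} y)"
    by (subst integral_density) (auto simp: normal_density_nonneg)
  also have "\<dots> = Phi x"
    by (simp add: Phi_def set_lebesgue_integral_def mult.commute)
  finally show ?thesis .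
qed



definition ebdd :: "real filter \<Rightarrow> (real \<Rightarrow> real) \<Rightarrow> bool" where
  "ebdd F f \<longleftrightarrow> (\<exists>C. eventually (\<lambda>x. \<bar>f x\<bar> \<le> C) F)"

lemma ebdd_const: "ebdd F (\<lambda>x. c)"
  unfolding ebdd_def by (intro exI[of _ "\<bar>c\<bar>"]) simp

lemma ebdd_cong: "ebdd F f \<Longrightarrow> eventually (\<lambda>x. f x = g x) F \<Longrightarrow> ebdd F g"
proof -
  assume "ebdd F f" and e: "eventually (\<lambda>x. f x = g x) F"
  then obtain C where "eventually (\<lambda>x. \<bar>f x\<bar> \<le> C) F" unfolding ebdd_def by auto
  with e have "eventually (\<lambda>x. \<bar>g x\<bar> \<le> C) F" by eventually_elim auto
  then show ?thesis unfolding ebdd_def by blast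
qed

lemma ebdd_mult: "ebdd F f \<Longrightarrow> ebdd F g \<Longrightarrow> ebdd F (\<lambda>x. f x * g x)"
proof -
  assume "ebdd F f" "ebdd F g"
  then obtain C1 C2 where "eventually (\<lambda>x. \<bar>f x\<bar> \<le> C1) F" "eventually (\<lambda>x. \<bar>g x\<bar> \<le> C2) F"
    unfolding ebdd_def by auto
  then have "eventually (\<lambda>x. \<bar>f x * g x\<bar> \<le> \<bar>C1\<bar> * \<bar>C2\<bar>) F"
  proof eventually_elim
    case (elim x)
    have "\<bar>f x\<bar> * \<bar>g x\<bar> \<le> \<bar>C1\<bar> * \<bar>C2\<bar>" using elim by (intro mult_mono) auto
    then show ?case by (simp add: abs_mult)
  qed
  then show ?thesis unfolding ebdd_def by blast
qed

lemma ebdd_sum: "finite A \<Longrightarrow> (\<And>i. i \<in> A \<Longrightarrow> ebdd F (f i)) \<Longrightarrow> ebdd F (\<lambda>x. \<Sum>i\<in>A. f i x)"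
proof (induction A rule: finite_induct)
  case empty then show ?case by (simp add: ebdd_const)
next
  case (insert a A)
  have "ebdd F (f a)" "ebdd F (\<lambda>x. \<Sum>i\<in>A. f i x)" using insert by auto
  then obtain C1 C2 where "eventually (\<lambda>x. \<bar>f a x\<bar> \<le> C1) F" "eventually (\<lambda>x. \<bar>\<Sum>i\<in>A. f i x\<bar> \<le> C2) F"
    unfolding ebdd_def by auto
  then have "eventually (\<lambda>x. \<bar>\<Sum>i\<in>insert a A. f i x\<bar> \<le> C1 + C2) F"
    by eventually_elim (use insert in auto)
  then show ?case unfolding ebdd_def by blast
qed

lemma aux_frac:
  fixes r A P B :: real
  assumes "r \<ge> 0" "P > 0" "B > 0"
  shows "((2*r+2)*(2*r+1)*A) / (2*P*((r+1)*B)) = (2*r+1)*(A/(P*B))"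
proof -
  have c: "2 * (r + 1) \<noteq> 0" using assms by auto
  have e1: "(2*r+2)*(2*r+1)*A = (2*(r+1)) * ((2*r+1)*A)" by algebra
  have e2: "2*P*((r+1)*B) = (2*(r+1)) * (P*B)" by algebra
  show ?thesis unfolding e1 e2 using c by simp
qed

lemma normal_moment_rec:
  assumes "k \<ge> 1"
  shows "integral\<^sup>L std_normal_distribution (\<lambda>x. x ^ Suc k) =
         real k * integral\<^sup>L std_normal_distribution (\<lambda>x. x ^ (k - 1))"
proof (cases "even k")
  case True
  then have o1: "odd (Suc k)" by simp
  have o2: "odd (k - 1)" using True assms by (cases k) auto
  show ?thesis using integral_std_normal_distribution_moment_odd[OF o1]
      integral_std_normal_distribution_moment_odd[OF o2] by simp
next
  case False
  then obtain q where q: "k = 2 * q + 1" by (metis oddE)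
  have e1: "Suc k = 2 * Suc q" using q by simp
  have e2: "k - 1 = 2 * q" using q by simp
  have "fact (2 * Suc q) / (2 ^ Suc q * fact (Suc q)) = real (2 * q + 1) * (fact (2 * q) / (2 ^ q * fact q) :: real)"
  proof -
    have "fact (2 * Suc q) = (real (2 * q + 2) * real (2 * q + 1)) * (fact (2 * q) :: real)"
      by (simp add: fact_Suc algebra_simps)
    moreover have "fact (Suc q) = real (q + 1) * (fact q :: real)" by (simp add: fact_Suc)
    ultimately have "fact (2 * Suc q) / (2 ^ Suc q * fact (Suc q)) =
       ((2*real q+2)*(2*real q+1)*fact (2*q)) / (2*2^q*((real q+1)*fact q) :: real)" by (simp add: algebra_simps)
    also have "\<dots> = (2*real q+1)*(fact (2*q)/(2^q*fact q))" by (rule aux_frac) auto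
    finally show ?thesis by simp
  qed
  then show ?thesis unfolding e1 e2 std_normal_distribution_even_moments(1) using q by simp
qed



lemma FS_cases:
  assumes R: "conv_radius a > 0"
  shows "(up_to_lnR (conv_radius a) = at_top \<and> up_to_R (conv_radius a) = at_top \<and> SS a = UNIV) \<or>
         (\<exists>r. r > 0 \<and> up_to_lnR (conv_radius a) = at_left (ln r) \<and> up_to_R (conv_radius a) = at_left r
              \<and> SS a = {..<ln r})"
proof (cases "conv_radius a")
  case (real r)
  then have r: "r > 0" using R by simp
  have "s \<in> SS a \<longleftrightarrow> s < ln r" for s
  proof -
    have "s \<in> SS a \<longleftrightarrow> exp s < r" by (simp add: SS_def real)
    also have "\<dots> \<longleftrightarrow> exp s < exp (ln r)" using r by simp
    also have "\<dots> \<longleftrightarrow> s < ln r" by (rule exp_less_cancel_iff)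
    finally show ?thesis .
  qed
  then have "SS a = {..<ln r}" by auto
  then show ?thesis using r real by (auto simp: up_to_lnR_def up_to_R_def)
next
  case PInf then show ?thesis by (auto simp: up_to_lnR_def up_to_R_def SS_def)
next
  case MInf then show ?thesis using R by simp
qed

lemma evSS:
  assumes R: "conv_radius a > 0"
  shows "eventually (\<lambda>s. s \<in> SS a) (up_to_lnR (conv_radius a))"
  using FS_cases[OF R]
proof
  assume "up_to_lnR (conv_radius a) = at_top \<and> up_to_R (conv_radius a) = at_top \<and> SS a = UNIV"
  then show ?thesis by simp
next
  assume "\<exists>r. r > 0 \<and> up_to_lnR (conv_radius a) = at_left (ln r) \<and> up_to_R (conv_radius a) = at_left r
              \<and> SS a = {..<ln r}"
  then obtain r where r: "up_to_lnR (conv_radius a) = at_left (ln r)" "SS a = {..<ln r}" by auto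
  show ?thesis unfolding r using eventually_at_left_real[of "ln r - 1" "ln r"]
    by (auto elim: eventually_mono)
qed

lemma expF:
  fixes a :: "nat \<Rightarrow> real"
  assumes R: "conv_radius a > 0"
  shows "filterlim exp (up_to_R (conv_radius a)) (up_to_lnR (conv_radius a))"
  using FS_cases[OF R]
proof
  assume "up_to_lnR (conv_radius a) = at_top \<and> up_to_R (conv_radius a) = at_top \<and> SS a = UNIV"
  then show ?thesis by (simp add: exp_at_top)
next
  assume "\<exists>r. r > 0 \<and> up_to_lnR (conv_radius a) = at_left (ln r) \<and> up_to_R (conv_radius a) = at_left r
              \<and> SS a = {..<ln r}"
  then obtain r where r: "r > 0" "up_to_lnR (conv_radius a) = at_left (ln r)" "up_to_R (conv_radius a) = at_left r"
    by auto
  have lim: "(exp \<longlongrightarrow> exp (ln r)) (at_left (ln r))" by (intro tendsto_intros)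
  have e0: "eventually (\<lambda>x. x \<in> {ln r - 1<..<ln r}) (at_left (ln r))"
    by (rule eventually_at_left_real) simp
  have ev: "eventually (\<lambda>s. exp s < r) (at_left (ln r))"
    using e0
  proof (rule eventually_mono)
    fix s assume "s \<in> {ln r - 1<..<ln r}"
    then have "exp s < exp (ln r)" by simp
    then show "exp s < r" using r by simp
  qed
  show ?thesis unfolding r(2,3) using lim r(1) by (intro tendsto_imp_filterlim_at_left ev) simp
qed

lemma seqF:
  fixes a :: "nat \<Rightarrow> real" and f :: "real \<Rightarrow> real"
  assumes R: "conv_radius a > 0"
    and H: "\<And>X. filterlim X (up_to_lnR (conv_radius a)) sequentially \<Longrightarrow> (\<lambda>i. f (X i)) \<longlonglongrightarrow> l"
  shows "(f \<longlongrightarrow> l) (up_to_lnR (conv_radius a))"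
  using FS_cases[OF R]
proof
  assume A: "up_to_lnR (conv_radius a) = at_top \<and> up_to_R (conv_radius a) = at_top \<and> SS a = UNIV"
  show ?thesis using A H by (auto intro!: tendsto_at_topI_sequentially)
next
  assume "\<exists>r. r > 0 \<and> up_to_lnR (conv_radius a) = at_left (ln r) \<and> up_to_R (conv_radius a) = at_left r
              \<and> SS a = {..<ln r}"
  then obtain r where r: "up_to_lnR (conv_radius a) = at_left (ln r)" by auto
  show ?thesis unfolding r
  proof (rule tendsto_at_left_sequentially[of "ln r - 1"])
    fix S :: "nat \<Rightarrow> real"
    assume S: "\<And>n. S n < ln r" "S \<longlonglongrightarrow> ln r"
    have "filterlim S (at_left (ln r)) sequentially"
      using S by (intro tendsto_imp_filterlim_at_left) auto
    then show "(\<lambda>n. f (S n)) \<longlonglongrightarrow> l" using H r by simp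
  qed simp
qed



locale main =
  fixes a :: "nat \<Rightarrow> real" and n :: nat
  assumes K: "classK a"
    and Gs: "gaussian a"
    and ev: "even n" and n4: "n \<ge> 4"
    and Hyp: "\<forall>j. 3 \<le> j \<and> j \<le> n \<longrightarrow>
           Limsup (up_to_lnR (conv_radius a))
             (\<lambda>s. ereal (\<bar>(deriv ^^ j) (fulcrum a) s\<bar> / ((deriv ^^ 2) (fulcrum a) s) powr (real j / 2)))
           < \<infinity>"
begin

abbreviation "FS \<equiv> up_to_lnR (conv_radius a)"

lemma nn: "a k \<ge> 0" using K by (simp add: classK_def)
lemma a0: "a 0 > 0" using K by (simp add: classK_def)
lemma Rpos: "conv_radius a > 0" using K by (simp add: classK_def)
lemma n0: "\<exists>n0>0. a n0 \<noteq> 0" using K by (simp add: classK_def)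

lemma vp: "s \<in> SS a \<Longrightarrow> var_f a (exp s) > 0"
  using n0 var_pos[where a=a, OF nn a0] by blast

lemma good_s: "s \<in> SS a \<Longrightarrow> good a s"
  by unfold_locales (auto simp: nn a0 vp)

lemma F2_eq: "s \<in> SS a \<Longrightarrow> (deriv ^^ 2) (fulcrum a) s = var_f a (exp s)"
  using mom2[where a=a, OF nn a0] by (simp add: var_mom)

definition rr :: "nat \<Rightarrow> real \<Rightarrow> real" where
  "rr j s = (if j = 1 then 0 else (deriv ^^ j) (fulcrum a) s / sqrt ((deriv ^^ 2) (fulcrum a) s) ^ j)"

lemma nm_rec:
  assumes s: "s \<in> SS a"
  shows "nm a (Suc k) s = (\<Sum>i\<le>k. real (k choose i) * rr (Suc i) s * nm a (k - i) s)"
proof -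
  interpret good a s by (rule good_s[OF s])
  define \<sigma> where "\<sigma> = sqrt (var_f a (exp s))"
  have \<sigma>: "\<sigma> > 0" using vp by (simp add: \<sigma>_def)
  have nmk: "nm a j s = mom a j s / \<sigma> ^ j" for j by (simp add: nm_mom \<sigma>_def)
  have rrs: "rr (Suc i) s = (if i = 0 then 0 else (deriv ^^ Suc i) (fulcrum a) s) / \<sigma> ^ Suc i" for i
    using F2_eq[OF s] by (simp add: rr_def \<sigma>_def)
  have "nm a (Suc k) s = (\<Sum>i\<le>k. real (k choose i) *
            (if i = 0 then 0 else (deriv ^^ Suc i) (fulcrum a) s) * mom a (k - i) s) / \<sigma> ^ Suc k"
    unfolding nmk by (simp add: mom_rec[where a=a, OF nn a0 s])
  also have "\<dots> = (\<Sum>i\<le>k. real (k choose i) *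
            (if i = 0 then 0 else (deriv ^^ Suc i) (fulcrum a) s) * mom a (k - i) s / \<sigma> ^ Suc k)"
    by (rule sum_divide_distrib)
  also have "\<dots> = (\<Sum>i\<le>k. real (k choose i) * rr (Suc i) s * nm a (k - i) s)"
  proof (rule sum.cong)
    fix i assume "i \<in> {..k}"
    then have "\<sigma> ^ Suc k = \<sigma> ^ Suc i * \<sigma> ^ (k - i)" by (simp add: power_add[symmetric])
    then show "real (k choose i) * (if i = 0 then 0 else (deriv ^^ Suc i) (fulcrum a) s) * mom a (k - i) s / \<sigma> ^ Suc k
        = real (k choose i) * rr (Suc i) s * nm a (k - i) s"
      unfolding rrs nmk using \<sigma> by simp
  qed simp
  finally show ?thesis .
qed

lemma nm0: "s \<in> SS a \<Longrightarrow> nm a 0 s = 1"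
proof -
  assume s: "s \<in> SS a"
  interpret good a s by (rule good_s[OF s])
  show ?thesis using sums_unique[OF ww_sums] by (simp add: nm_def)
qed

lemma rr2: "s \<in> SS a \<Longrightarrow> rr 2 s = 1"
proof -
  assume s: "s \<in> SS a"
  have "var_f a (exp s) > 0" by (rule vp[OF s])
  then show ?thesis by (simp add: rr_def F2_eq[OF s])
qed

lemma rr1: "rr (Suc 0) = (\<lambda>s. 0)"
  by (rule ext) (simp add: rr_def)

lemma ratio_eq:
  assumes s: "s \<in> SS a" and j: "j \<ge> 2"
  shows "(deriv ^^ j) (fulcrum a) s / ((deriv ^^ 2) (fulcrum a) s) powr (real j / 2) = rr j s"
proof -
  define v where "v = (deriv ^^ 2) (fulcrum a) s"
  have v: "v > 0" using F2_eq[OF s] vp[OF s] by (simp add: v_def)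
  have "v powr (real j / 2) = (v powr (1/2)) ^ j"
    using v by (simp add: powr_power)
  also have "\<dots> = sqrt v ^ j" using v by (simp add: powr_half_sqrt)
  finally show ?thesis using j by (simp add: rr_def v_def)
qed

lemma rr_bdd:
  assumes j: "3 \<le> j" "j \<le> n"
  shows "ebdd FS (rr j)"
proof -
  have L: "Limsup FS (\<lambda>s. ereal (\<bar>(deriv ^^ j) (fulcrum a) s\<bar> / ((deriv ^^ 2) (fulcrum a) s) powr (real j / 2))) < \<infinity>"
    using Hyp j by blast
  obtain B where B: "Limsup FS (\<lambda>s. ereal (\<bar>(deriv ^^ j) (fulcrum a) s\<bar> / ((deriv ^^ 2) (fulcrum a) s) powr (real j / 2))) < ereal B"
    using ereal_dense2[OF L] by auto
  have "eventually (\<lambda>s. \<bar>rr j s\<bar> \<le> B) FS"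
    using Limsup_lessD[OF B] evSS[OF Rpos]
  proof eventually_elim
    case (elim s)
    have "(deriv ^^ 2) (fulcrum a) s powr (real j / 2) > 0" using F2_eq[OF elim(2)] vp[OF elim(2)] by simp
    then have "\<bar>(deriv ^^ j) (fulcrum a) s / (deriv ^^ 2) (fulcrum a) s powr (real j / 2)\<bar> < B"
      using elim(1) by simp
    then show ?case using ratio_eq[OF elim(2)] j by simp
  qed
  then show ?thesis unfolding ebdd_def by blast
qed

lemma rr_ebdd: "1 \<le> j \<Longrightarrow> j \<le> n \<Longrightarrow> ebdd FS (rr j)"
proof -
  assume j: "1 \<le> j" "j \<le> n"
  consider "j = 1" | "j = 2" | "3 \<le> j" using j by linarith
  then show ?thesis
  proof cases
    case 1 then show ?thesis by (simp add: rr1 ebdd_const)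
  next
    case 2
    have "eventually (\<lambda>s. 1 = rr j s) FS" using evSS[OF Rpos] by eventually_elim (simp add: rr2 2)
    then show ?thesis by (rule ebdd_cong[OF ebdd_const])
  next
    case 3 then show ?thesis using rr_bdd j by simp
  qed
qed

lemma nm_bdd: "k \<le> n \<Longrightarrow> ebdd FS (nm a k)"
proof (induction k rule: less_induct)
  case (less k)
  show ?case
  proof (cases k)
    case 0
    have "eventually (\<lambda>s. 1 = nm a k s) FS" using evSS[OF Rpos] by eventually_elim (simp add: nm0 0)
    then show ?thesis by (rule ebdd_cong[OF ebdd_const])
  next
    case (Suc k')
    have "ebdd FS (\<lambda>s. \<Sum>i\<le>k'. real (k' choose i) * rr (Suc i) s * nm a (k' - i) s)"
    proof (rule ebdd_sum)
      fix i assume i: "i \<in> {..k'}"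
      have "ebdd FS (rr (Suc i))" using i less.prems Suc by (intro rr_ebdd) auto
      moreover have "ebdd FS (nm a (k' - i))" using i less.prems Suc by (intro less.IH) auto
      ultimately show "ebdd FS (\<lambda>s. real (k' choose i) * rr (Suc i) s * nm a (k' - i) s)"
        by (intro ebdd_mult ebdd_const)
    qed simp
    moreover have "eventually (\<lambda>s. (\<Sum>i\<le>k'. real (k' choose i) * rr (Suc i) s * nm a (k' - i) s) = nm a k s) FS"
      using evSS[OF Rpos] by eventually_elim (simp add: nm_rec Suc)
    ultimately show ?thesis by (rule ebdd_cong)
  qed
qed

abbreviation "zk k \<equiv> integral\<^sup>L std_normal_distribution (\<lambda>x. x ^ k)"

lemma core:
  assumes X: "filterlim X FS sequentially" and kn: "k < n"
  shows "(\<lambda>i. nm a k (X i)) \<longlonglongrightarrow> zk k"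
proof -
  have evX: "eventually (\<lambda>i. X i \<in> SS a) sequentially"
    by (rule eventually_compose_filterlim[OF evSS[OF Rpos] X])
  define M where "M = (\<lambda>i. if X i \<in> SS a then Ms a (X i) else std_normal_distribution)"
  have dM: "real_distribution (M i)" for i
    using good.Ms_dist[OF good_s[of "X i"]] real_dist_normal_dist by (simp add: M_def)
  have wc: "weak_conv_m M std_normal_distribution"
    unfolding weak_conv_m_def weak_conv_def
  proof (intro allI impI)
    fix x
    have g: "((\<lambda>t. cdf_normalized a t x) \<longlongrightarrow> Phi x) (up_to_R (conv_radius a))"
      using Gs by (simp add: gaussian_def)
    have "((\<lambda>i. cdf_normalized a (exp (X i)) x) \<longlongrightarrow> Phi x) sequentially"
      using filterlim_compose[OF g filterlim_compose[OF expF[OF Rpos] X]] .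
    moreover have "eventually (\<lambda>i. cdf_normalized a (exp (X i)) x = cdf (M i) x) sequentially"
      using evX by eventually_elim (simp add: M_def good.Ms_cdf[OF good_s])
    ultimately show "(\<lambda>i. cdf (M i) x) \<longlonglongrightarrow> cdf std_normal_distribution x"
      unfolding normal_cdf by (rule Lim_transform_eventually)
  qed
  have intM: "integrable (M i) (\<lambda>x. x ^ n)" for i
    using good.Ms_moment(1)[OF good_s[of "X i"]] integrable_std_normal_distribution_moment
    by (simp add: M_def)
  obtain C where C: "eventually (\<lambda>s. \<bar>nm a n s\<bar> \<le> C) FS" using nm_bdd[of n] by (auto simp: ebdd_def)
  have bd: "eventually (\<lambda>i. integral\<^sup>L (M i) (\<lambda>x. x ^ n) \<le> C) sequentially"
    using eventually_compose_filterlim[OF C X] evX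
    by eventually_elim (simp add: M_def good.Ms_moment(2)[OF good_s])
  have "(\<lambda>i. integral\<^sup>L (M i) (\<lambda>x. x ^ k)) \<longlonglongrightarrow> zk k"
    by (rule trunc_moment[OF dM real_dist_normal_dist wc ev kn intM integrable_std_normal_distribution_moment bd])
  moreover have "eventually (\<lambda>i. integral\<^sup>L (M i) (\<lambda>x. x ^ k) = nm a k (X i)) sequentially"
    using evX by eventually_elim (simp add: M_def good.Ms_moment(2)[OF good_s])
  ultimately show ?thesis by (rule Lim_transform_eventually)
qed

lemma nm_lim: "k < n \<Longrightarrow> (nm a k \<longlongrightarrow> zk k) FS"
  by (rule seqF[OF Rpos]) (rule core)

lemma rr_lim: "3 \<le> j \<Longrightarrow> j < n \<Longrightarrow> (rr j \<longlongrightarrow> 0) FS"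
proof (induction j rule: less_induct)
  case (less j)
  define k where "k = j - 1"
  have jk: "j = Suc k" and k2: "k \<ge> 2" using less.prems by (auto simp: k_def)
  have eq: "eventually (\<lambda>s. nm a j s - (\<Sum>i<k. real (k choose i) * rr (Suc i) s * nm a (k - i) s) = rr j s) FS"
    using evSS[OF Rpos]
  proof eventually_elim
    case (elim s)
    have "nm a j s = (\<Sum>i\<le>k. real (k choose i) * rr (Suc i) s * nm a (k - i) s)"
      unfolding jk by (rule nm_rec[OF elim])
    also have "\<dots> = (\<Sum>i<k. real (k choose i) * rr (Suc i) s * nm a (k - i) s) + rr j s"
      using nm0[OF elim] by (simp add: lessThan_Suc_atMost[symmetric] jk)
    finally show ?case by simp
  qed
  define c where "c = (\<lambda>i::nat. if i = 1 then 1 else (0::real))"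
  have rlim: "(rr (Suc i) \<longlongrightarrow> c i) FS" if i: "i < k" for i
  proof -
    consider "i = 0" | "i = 1" | "i \<ge> 2" by linarith
    then show ?thesis
    proof cases
      case 1 then show ?thesis by (simp add: rr1 c_def)
    next
      case 2
      have r2: "Suc i = 2" using 2 by simp
      have "eventually (\<lambda>s. 1 = rr (Suc i) s) FS"
        using evSS[OF Rpos] unfolding r2 by eventually_elim (simp add: rr2)
      from Lim_transform_eventually[OF tendsto_const[of "1::real" FS] this]
      show ?thesis using 2 by (simp add: c_def)
    next
      case 3
      have "(rr (Suc i) \<longlongrightarrow> 0) FS" using i 3 less.prems jk by (intro less.IH) auto
      then show ?thesis using 3 by (simp add: c_def)
    qed
  qed
  have "((\<lambda>s. nm a j s - (\<Sum>i<k. real (k choose i) * rr (Suc i) s * nm a (k - i) s)) \<longlongrightarrow>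
        zk j - (\<Sum>i<k. real (k choose i) * c i * zk (k - i))) FS"
    using less.prems jk
    by (intro tendsto_diff tendsto_sum tendsto_mult tendsto_const nm_lim rlim) auto
  moreover have "(\<Sum>i<k. real (k choose i) * c i * zk (k - i)) = real k * zk (k - 1)"
  proof -
    have "(\<Sum>i<k. real (k choose i) * c i * zk (k - i)) = (\<Sum>i<k. if i = 1 then real (k choose i) * zk (k - i) else 0)"
      by (rule sum.cong) (auto simp: c_def)
    also have "\<dots> = real (k choose 1) * zk (k - 1)" using k2 by (subst sum.delta) auto
    finally show ?thesis by simp
  qed
  moreover have "zk j = real k * zk (k - 1)" unfolding jk using k2 by (intro normal_moment_rec) simp
  ultimately have "((\<lambda>s. nm a j s - (\<Sum>i<k. real (k choose i) * rr (Suc i) s * nm a (k - i) s)) \<longlongrightarrow> 0) FS"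
    by simp
  then show ?case using eq by (rule Lim_transform_eventually)
qed

lemma final:
  assumes "3 \<le> j" "j < n"
  shows "((\<lambda>s. (deriv ^^ j) (fulcrum a) s / ((deriv ^^ 2) (fulcrum a) s) powr (real j / 2)) \<longlongrightarrow> 0) FS"
proof -
  have "eventually (\<lambda>s. rr j s = (deriv ^^ j) (fulcrum a) s / ((deriv ^^ 2) (fulcrum a) s) powr (real j / 2)) FS"
    using evSS[OF Rpos] by eventually_elim (use assms ratio_eq in simp)
  with rr_lim[OF assms] show ?thesis by (rule Lim_transform_eventually)
qed

end

theorem theorem3p3:
  fixes a :: "nat \<Rightarrow> real" and n :: nat
  assumes "classK a"
    and "gaussian a"
    and "even n" and "n \<ge> 4"
    and "\<forall>j. 3 \<le> j \<and> j \<le> n \<longrightarrow>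
           Limsup (up_to_lnR (conv_radius a))
             (\<lambda>s. ereal (\<bar>(deriv ^^ j) (fulcrum a) s\<bar> / ((deriv ^^ 2) (fulcrum a) s) powr (real j / 2)))
           < \<infinity>"
  shows "\<forall>j. 3 \<le> j \<and> j < n \<longrightarrow>
           ((\<lambda>s. (deriv ^^ j) (fulcrum a) s / ((deriv ^^ 2) (fulcrum a) s) powr (real j / 2))
             \<longlongrightarrow> 0) (up_to_lnR (conv_radius a))"
proof -
  interpret main a n using assms by unfold_locales
  show ?thesis using final by blast
qed

end
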